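(* Suppose Assumptions 1–4 hold and $p$ is convex. Let $\mathbf{x}^S$ be a social optimum and $\mathbf{x}^P$ a monopoly output, with $X^S=\sum_n x_n^S$, $X^P=\sum_n x_n^P$. (a) If $p(X^P)=p(X^S)$, then $\gamma(\mathbf{x}^P)=1$. (b) If $p(X^P)\ne p(X^S)$, then $p$ is differentiable at $X^P$; letting $c=|p'(X^P)|$, $d=\left|\dfrac{p(X^S)-p(X^P)}{X^S-X^P}\right|$ and $\overline c=c/d$, we have $\overline c\ge1$ and $\gamma(\mathbf{x}^P)\ge\dfrac{3}{3+\overline c}$. (c) The bound is tight at $\overline c=1$: there exists a model satisfying these hypotheses with $\overline c=1$ and a monopoly output whose efficiency is exactly $3/4$.
   Context: Cournot model: $N$ suppliers, inverse demand $p:[0,\infty)\to[0,\infty)$, supplier $n$ has cost $C_n:[0,\infty)\to[0,\infty)$ and chooses $x_n\ge0$; $X=\sum_n x_n$. $C_n'(0)$ is the right derivative at $0$. Assumption 1: each $C_n$ is convex, continuous, nondecreasing on $[0,\infty)$, continuously differentiable on $(0,\infty)$, with $C_n(0)=0$. Assumption 2: $p$ is continuous, nonnegative, nonincreasing, $p(0)>0$; its right derivative at $0$ exists and at every $q>0$ its left and right derivatives exist. Assumption 3: there exists $R>0$ such that $p(R)\le\min_n C_n'(0)$. Assumption 4: $p(0)>\min_n C_n'(0)$. A monopoly output is an optimal solution $\mathbf{x}^P$ of $\max_{\mathbf{x}\ge0}\ p\!\left(\sum_n x_n\right)\sum_n x_n-\sum_n C_n(x_n)$ (maximum total profit of all suppliers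 colluding). Social welfare of $\mathbf{x}\ge0$: $W(\mathbf{x})=\int_0^X p(q)\,dq-\sum_{n=1}^N C_n(x_n)$; a social optimum $\mathbf{x}^S$ maximizes $W$. Efficiency: $\gamma(\mathbf{x})=W(\mathbf{x})/W(\mathbf{x}^S)$. *)

theory Defs
  imports "HOL-Analysis.Analysis"
begin

text \<open>Suppliers are indexed by n < N; an output profile is x :: nat => real,
  of which only the entries x 0, ..., x (N-1) matter.\<close>

definition total :: "nat \<Rightarrow> (nat \<Rightarrow> real) \<Rightarrow> real" where
  "total N x = (\<Sum>n<N. x n)"

definition nonneg_profile :: "nat \<Rightarrow> (nat \<Rightarrow> real) \<Rightarrow> bool" where
  "nonneg_profile N x \<longleftrightarrow> (\<forall>n<N. 0 \<le> x n)"

definition rderiv0 :: "(real \<Rightarrow> real) \<Rightarrow> real" where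
  "rderiv0 f = (THE d. (f has_real_derivative d) (at 0 within {0..}))"

definition cost_assm :: "(real \<Rightarrow> real) \<Rightarrow> bool" where
  "cost_assm C \<longleftrightarrow> convex_on {0..} C \<and> continuous_on {0..} C \<and> mono_on {0..} C
     \<and> C C1_differentiable_on {0<..} \<and> C 0 = 0"

definition price_assm :: "(real \<Rightarrow> real) \<Rightarrow> bool" where
  "price_assm p \<longleftrightarrow> continuous_on {0..} p \<and> (\<forall>q\<ge>0. 0 \<le> p q)
     \<and> antimono_on {0..} p \<and> 0 < p 0
     \<and> (\<exists>d. (p has_real_derivative d) (at 0 within {0..}))
     \<and> (\<forall>q>0. (\<exists>d. (p has_real_derivative d) (at q within {..q}))
              \<and> (\<exists>d. (p has_real_derivative d) (at q within {q..})))"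

text \<open>Assumptions 1--4 together.\<close>
definition cournot_assms :: "nat \<Rightarrow> (real \<Rightarrow> real) \<Rightarrow> (nat \<Rightarrow> real \<Rightarrow> real) \<Rightarrow> bool" where
  "cournot_assms N p C \<longleftrightarrow> 1 \<le> N
     \<and> (\<forall>n<N. cost_assm (C n))
     \<and> price_assm p
     \<and> (\<exists>R>0. \<forall>n<N. p R \<le> rderiv0 (C n))
     \<and> (\<exists>n<N. rderiv0 (C n) < p 0)"

definition total_profit :: "nat \<Rightarrow> (real \<Rightarrow> real) \<Rightarrow> (nat \<Rightarrow> real \<Rightarrow> real) \<Rightarrow> (nat \<Rightarrow> real) \<Rightarrow> real" where
  "total_profit N p C x = p (total N x) * total N x - (\<Sum>n<N. C n (x n))"

definition monopoly_output :: "nat \<Rightarrow> (real \<Rightarrow> real) \<Rightarrow> (nat \<Rightarrow> real \<Rightarrow> real) \<Rightarrow> (nat \<Rightarrow> real) \<Rightarrow> bool" where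
  "monopoly_output N p C x \<longleftrightarrow> nonneg_profile N x
     \<and> (\<forall>y. nonneg_profile N y \<longrightarrow> total_profit N p C y \<le> total_profit N p C x)"

definition welfare :: "nat \<Rightarrow> (real \<Rightarrow> real) \<Rightarrow> (nat \<Rightarrow> real \<Rightarrow> real) \<Rightarrow> (nat \<Rightarrow> real) \<Rightarrow> real" where
  "welfare N p C x = integral {0..total N x} p - (\<Sum>n<N. C n (x n))"

definition social_optimum :: "nat \<Rightarrow> (real \<Rightarrow> real) \<Rightarrow> (nat \<Rightarrow> real \<Rightarrow> real) \<Rightarrow> (nat \<Rightarrow> real) \<Rightarrow> bool" where
  "social_optimum N p C x \<longleftrightarrow> nonneg_profile N x
     \<and> (\<forall>y. nonneg_profile N y \<longrightarrow> welfare N p C y \<le> welfare N p C x)"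

definition efficiency :: "nat \<Rightarrow> (real \<Rightarrow> real) \<Rightarrow> (nat \<Rightarrow> real \<Rightarrow> real) \<Rightarrow> (nat \<Rightarrow> real) \<Rightarrow> (nat \<Rightarrow> real) \<Rightarrow> real" where
  "efficiency N p C xS x = welfare N p C x / welfare N p C xS"

definition cbar :: "(real \<Rightarrow> real) \<Rightarrow> real \<Rightarrow> real \<Rightarrow> real" where
  "cbar p XS XP = \<bar>deriv p XP\<bar> / \<bar>(p XS - p XP) / (XS - XP)\<bar>"

end

theory Submission
  imports Defs
begin


lemma sum_upd:
  fixes g :: "nat \<Rightarrow> real \<Rightarrow> real"
  assumes "n < N"
  shows "(\<Sum>k<N. g k ((x(n:=v)) k)) = (\<Sum>k<N. g k (x k)) - g n (x n) + g n v"
proof -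
  have fin: "finite {..<N}" by simp
  have a: "(\<Sum>k<N. g k ((x(n:=v)) k)) = g n v + (\<Sum>k\<in>{..<N}-{n}. g k ((x(n:=v)) k))"
    using assms by (simp add: sum.remove)
  have b: "(\<Sum>k\<in>{..<N}-{n}. g k ((x(n:=v)) k)) = (\<Sum>k\<in>{..<N}-{n}. g k (x k))"
    by (rule sum.cong) auto
  have c: "(\<Sum>k<N. g k (x k)) = g n (x n) + (\<Sum>k\<in>{..<N}-{n}. g k (x k))"
    using assms by (simp add: sum.remove)
  show ?thesis using a b c by simp
qed

lemma mono_perturb:
  assumes mon: "monopoly_output N p C x" and n: "n < N" and nn: "0 \<le> x n + t"
  shows "p (total N x + t) * (total N x + t) - C n (x n + t) \<le> p (total N x) * total N x - C n (x n)"
proof -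
  let ?y = "x(n := x n + t)"
  have "nonneg_profile N ?y" using mon nn unfolding monopoly_output_def nonneg_profile_def by auto
  then have "total_profit N p C ?y \<le> total_profit N p C x" using mon by (auto simp: monopoly_output_def)
  moreover have "total N ?y = total N x + t" using sum_upd[of n N "\<lambda>k z. z" x] n by (simp add: total_def)
  moreover have "(\<Sum>k<N. C k (?y k)) = (\<Sum>k<N. C k (x k)) - C n (x n) + C n (x n + t)"
    using sum_upd[of n N C x] n by simp
  ultimately show ?thesis by (simp add: total_profit_def)
qed

lemma at_right_le_within: "at_right (a::real) \<le> at a within {a..}"
  by (rule at_le) auto

lemma not_bot_within_Ici: "\<not> trivial_limit (at (a::real) within {a..})"
  using at_right_le_within[of a] trivial_limit_at_right_real[of a]
  by (metis bot.extremum_uniqueI)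

lemma at_left_le_within: "at_left (a::real) \<le> at a within {..a}"
  by (rule at_le) auto

lemma not_bot_within_Iic: "\<not> trivial_limit (at (a::real) within {..a})"
  using at_left_le_within[of a] trivial_limit_at_left_real[of a]
  by (metis bot.extremum_uniqueI)

lemma rderiv_exists:
  fixes C :: "real \<Rightarrow> real"
  assumes "cost_assm C"
  shows "(C has_real_derivative rderiv0 C) (at 0 within {0..})"
proof -
  have cv: "convex_on {0..} C" and mo: "mono_on {0..} C" and c0: "C 0 = 0"
    using assms by (auto simp: cost_assm_def)
  define g where "g t = C t / t" for t :: real
  have gmono: "g s \<le> g t" if "0 < s" "s \<le> t" for s t
  proof (cases "s = t")
    case False
    then have "s < t" using that by simp
    have "(C 0 - C s) / (0 - s) \<le> (C 0 - C t) / (0 - t)"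
      using convex_on_slope_le(1)[OF cv, of 0 t s] that \<open>s < t\<close> by auto
    then show ?thesis using c0 by (simp add: g_def)
  qed simp
  have gpos: "0 \<le> g t" if "0 < t" for t
  proof -
    have "C 0 \<le> C t" using mo that by (auto intro: mono_onD)
    then show ?thesis using c0 that by (simp add: g_def)
  qed
  define L where "L = Inf (g ` {0<..})"
  have bdd: "bdd_below (g ` {0<..})" using gpos by (auto intro!: bdd_belowI[of _ 0])
  have lim: "(g \<longlongrightarrow> L) (at_right 0)"
  proof (rule decreasing_tendsto)
    show "\<forall>\<^sub>F n in at_right 0. L \<le> g n"
      using eventually_at_right_less[of "0::real"]
      by eventually_elim (auto simp: L_def intro!: cInf_lower bdd)
  next
    fix y assume "L < y"
    then obtain t where t: "0 < t" "g t < y"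
      unfolding L_def using cInf_less_iff[OF _ bdd, of y] by auto
    show "\<forall>\<^sub>F n in at_right 0. g n < y"
      unfolding eventually_at_right[OF t(1)]
      using t gmono by (intro exI[of _ t]) (smt (verit))
  qed
  have "((\<lambda>y. (C y - C 0) / (y - 0)) \<longlongrightarrow> L) (at 0 within {0<..})"
  proof -
    have "g = (\<lambda>t. C t / t)" by (auto simp: g_def)
    then show ?thesis using lim c0 by simp
  qed
  moreover have "at (0::real) within {0..} = at 0 within {0<..}"
  proof -
    have "{0::real..} - {0} = {0<..} - {0}" by auto
    then show ?thesis by (simp add: at_within_def)
  qed
  ultimately have "((\<lambda>y. (C y - C 0) / (y - 0)) \<longlongrightarrow> L) (at 0 within {0..})" by simp
  then have d: "(C has_real_derivative L) (at 0 within {0..})"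
    by (simp add: has_field_derivative_iff)
  have "rderiv0 C = L"
    unfolding rderiv0_def
  proof (rule the_equality)
    fix d assume "(C has_real_derivative d) (at 0 within {0..})"
    then show "d = L" using d not_bot_within_Ici[of 0]
      by (auto simp: has_field_derivative_iff intro: tendsto_unique)
  qed (rule d)
  then show ?thesis using d by simp
qed



lemma pmono: assumes "price_assm p" "0 \<le> a" "a \<le> b" shows "p b \<le> p a"
proof -
  have "antimono_on {0..} p" using assms(1) unfolding price_assm_def by blast
  then show ?thesis using assms(2,3) monotone_onD[of "{0..}" "(\<le>)" "\<lambda>x y. y \<le> x" p a b] by simp
qed

lemma pint: assumes "price_assm p" "0 \<le> a" shows "p integrable_on {a..b}"
proof -
  have "continuous_on {0..} p" using assms unfolding price_assm_def by blast
  then have "continuous_on {a..b} p" by (rule continuous_on_subset) (use assms in auto)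
  then show ?thesis by (rule integrable_continuous_interval)
qed

lemma cost_nonneg: assumes "cost_assm C" "0 \<le> x" shows "0 \<le> C x"
proof -
  have m: "mono_on {0..} C" and z: "C 0 = 0" using assms(1) unfolding cost_assm_def by blast+
  have "C 0 \<le> C x" using assms(2) by (intro mono_onD[OF m]) auto
  then show ?thesis using z by simp
qed

lemma sumC_nonneg:
  assumes "\<forall>n<N. cost_assm (C n)" "nonneg_profile N x"
  shows "0 \<le> (\<Sum>n<N. C n (x n))"
  proof (rule sum_nonneg)
  fix n assume "n \<in> {..<N}"
  then show "0 \<le> C n (x n)" using assms unfolding nonneg_profile_def by (metis cost_nonneg lessThan_iff)
qed

lemma total_nonneg: "nonneg_profile N x \<Longrightarrow> 0 \<le> total N x"
  unfolding nonneg_profile_def total_def by (auto intro!: sum_nonneg)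

lemma int_lower: assumes "price_assm p" "0 \<le> y"
  shows "p y * y \<le> integral {0..y} p"
proof -
  have "integral {0..y} (\<lambda>_. p y) \<le> integral {0..y} p"
    using assms by (intro integral_le pint[OF assms(1)]) (auto intro: pmono)
  then show ?thesis using assms by (simp add: mult.commute)
qed

lemma test_profile:
  assumes "cournot_assms N p C"
  shows "\<exists>e. nonneg_profile N e \<and> 0 < total_profit N p C e \<and> total_profit N p C e \<le> welfare N p C e"
proof -
  from assms obtain n0 where n0: "n0 < N" "rderiv0 (C n0) < p 0"
    by (auto simp: cournot_assms_def)
  have ca: "\<forall>n<N. cost_assm (C n)" and pa: "price_assm p" using assms by (auto simp: cournot_assms_def)
  define r where "r = rderiv0 (C n0)"
  have "(C n0 has_real_derivative r) (at 0 within {0..})"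
    using rderiv_exists ca n0 by (simp add: r_def)
  then have "((\<lambda>y. (C n0 y - C n0 0) / (y - 0)) \<longlongrightarrow> r) (at 0 within {0..})"
    by (simp add: has_field_derivative_iff)
  then have l1: "((\<lambda>y. C n0 y / y) \<longlongrightarrow> r) (at_right 0)"
    using ca n0 by (auto simp: cost_assm_def intro: tendsto_mono[OF at_right_le_within])
  have "continuous_on {0..} p" using pa by (simp add: price_assm_def)
  then have "(p \<longlongrightarrow> p 0) (at 0 within {0..})" by (simp add: continuous_on_def)
  then have l2: "(p \<longlongrightarrow> p 0) (at_right 0)" by (rule tendsto_mono[OF at_right_le_within])
  have "((\<lambda>y. p y - C n0 y / y) \<longlongrightarrow> p 0 - r) (at_right 0)"
    by (intro tendsto_diff l1 l2)
  moreover have "0 < p 0 - r" using n0 by (simp add: r_def)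
  ultimately have "\<forall>\<^sub>F y in at_right 0. 0 < p y - C n0 y / y"
    by (rule order_tendstoD(1))
  then have "\<forall>\<^sub>F y in at_right 0. 0 < y \<and> 0 < p y - C n0 y / y"
    using eventually_at_right_less[of "0::real"] by eventually_elim auto
  then obtain y :: real where y: "0 < y" "0 < p y - C n0 y / y"
    using eventually_happens' trivial_limit_at_right_real by blast
  define e where "e = (\<lambda>k. if k = n0 then y else 0)"
  have nn: "nonneg_profile N e" using y by (auto simp: nonneg_profile_def e_def)
  have tot: "total N e = y" using n0 by (simp add: total_def e_def)
  have "(\<Sum>k<N. C k (e k)) = (\<Sum>k<N. if k = n0 then C n0 y else 0)"
  proof (rule sum.cong)
    fix k assume "k \<in> {..<N}"
    then have "C k 0 = 0" using ca by (simp add: cost_assm_def)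
    then show "C k (e k) = (if k = n0 then C n0 y else 0)" by (simp add: e_def)
  qed simp
  also have "\<dots> = C n0 y" using n0 by simp
  finally have cs: "(\<Sum>k<N. C k (e k)) = C n0 y" .
  have "0 < y * (p y - C n0 y / y)" using y by simp
  then have "0 < p y * y - C n0 y" using y by (simp add: field_simps)
  then have "0 < total_profit N p C e" by (simp add: total_profit_def tot cs)
  moreover have "total_profit N p C e \<le> welfare N p C e"
    using int_lower[OF pa, of y] y by (simp add: total_profit_def welfare_def tot cs)
  ultimately show ?thesis using nn by blast
qed



lemma at_right_le_at: "at_right (a::real) \<le> at a"
  using at_le[of "{a<..}" UNIV a] by simp
lemma at_left_le_at: "at_left (a::real) \<le> at a"
  using at_le[of "{..<a}" UNIV a] by simp

lemma quot_right: "(f has_real_derivative D) (at X within {X..}) \<Longrightarrow>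
   ((\<lambda>y. (f y - f X)/(y - X)) \<longlongrightarrow> D) (at_right X)"
  by (simp add: has_field_derivative_iff tendsto_mono[OF at_right_le_within])
lemma quot_left: "(f has_real_derivative D) (at X within {..X}) \<Longrightarrow>
   ((\<lambda>y. (f y - f X)/(y - X)) \<longlongrightarrow> D) (at_left X)"
  by (simp add: has_field_derivative_iff tendsto_mono[OF at_left_le_within])
lemma quot_right': "(f has_real_derivative D) (at X) \<Longrightarrow>
   ((\<lambda>y. (f y - f X)/(y - X)) \<longlongrightarrow> D) (at_right X)"
  by (simp add: has_field_derivative_iff tendsto_mono[OF at_right_le_at])
lemma quot_left': "(f has_real_derivative D) (at X) \<Longrightarrow>
   ((\<lambda>y. (f y - f X)/(y - X)) \<longlongrightarrow> D) (at_left X)"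
  by (simp add: has_field_derivative_iff tendsto_mono[OF at_left_le_at])

lemma XP_pos:
  assumes model: "cournot_assms N p C" and mon: "monopoly_output N p C xP"
  shows "0 < total N xP"
proof (rule ccontr)
  assume "\<not> 0 < total N xP"
  moreover have "0 \<le> total N xP" using mon total_nonneg by (auto simp: monopoly_output_def)
  ultimately have z: "total N xP = 0" by simp
  obtain e where e: "nonneg_profile N e" "0 < total_profit N p C e"
    using test_profile[OF model] by blast
  have "total_profit N p C e \<le> total_profit N p C xP" using mon e by (auto simp: monopoly_output_def)
  moreover have "0 \<le> (\<Sum>n<N. C n (xP n))"
    using model mon by (intro sumC_nonneg) (auto simp: cournot_assms_def monopoly_output_def)
  ultimately show False using e z by (simp add: total_profit_def)
qed

lemma WS_pos:
  assumes model: "cournot_assms N p C" and soc: "social_optimum N p C xS"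
  shows "0 < welfare N p C xS" "0 < total N xS"
proof -
  obtain e where e: "nonneg_profile N e" "0 < total_profit N p C e" "total_profit N p C e \<le> welfare N p C e"
    using test_profile[OF model] by blast
  have "welfare N p C e \<le> welfare N p C xS" using soc e by (auto simp: social_optimum_def)
  then show W: "0 < welfare N p C xS" using e by simp
  show "0 < total N xS"
  proof (rule ccontr)
    assume "\<not> 0 < total N xS"
    moreover have "0 \<le> total N xS" using soc total_nonneg by (auto simp: social_optimum_def)
    ultimately have z: "total N xS = 0" by simp
    have "0 \<le> (\<Sum>n<N. C n (xS n))"
      using model soc by (intro sumC_nonneg) (auto simp: cournot_assms_def social_optimum_def)
    then show False using W z by (simp add: welfare_def)
  qed
qed



lemma exists_pos_component:
  assumes "0 < total N x"
  shows "\<exists>n<N. 0 < x n"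
proof (rule ccontr)
  assume "\<not> (\<exists>n<N. 0 < x n)"
  then have "total N x \<le> 0" unfolding total_def by (intro sum_nonpos) auto
  then show False using assms by simp
qed

lemma p_diff:
  assumes model: "cournot_assms N p C" and pconv: "convex_on {0..} p"
    and mon: "monopoly_output N p C xP"
  shows "\<exists>D. (p has_real_derivative D) (at (total N xP))"
proof -
  define X where "X = total N xP"
  have X: "0 < X" using XP_pos[OF model mon] by (simp add: X_def)
  have pa: "price_assm p" and ca: "\<forall>n<N. cost_assm (C n)" using model by (auto simp: cournot_assms_def)
  obtain a where a: "(p has_real_derivative a) (at X within {..X})"
    using pa X unfolding price_assm_def by blast
  obtain b where b: "(p has_real_derivative b) (at X within {X..})"
    using pa X unfolding price_assm_def by blast
  define Q where "Q y = (p y - p X) / (y - X)" for y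
  have QL: "(Q \<longlongrightarrow> a) (at_left X)" using quot_left[OF a] unfolding Q_def .
  have QR: "(Q \<longlongrightarrow> b) (at_right X)" using quot_right[OF b] unfolding Q_def .
  have slope: "Q s \<le> Q t" if "0 \<le> s" "s < X" "X < t" for s t
  proof -
    have "(p s - p X) / (s - X) \<le> (p s - p t) / (s - t)"
      using convex_on_slope_le(1)[OF pconv, of s t X] that by auto
    also have "\<dots> \<le> (p X - p t) / (X - t)"
      using convex_on_slope_le(2)[OF pconv, of s t X] that by auto
    also have "\<dots> = (p t - p X) / (t - X)"
      by (metis minus_diff_eq minus_divide_divide)
    finally show ?thesis by (simp add: Q_def)
  qed
  have aQ: "a \<le> Q t" if "X < t" for t
  proof (rule tendsto_upperbound[OF QL])
    show "\<forall>\<^sub>F s in at_left X. Q s \<le> Q t"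
      unfolding eventually_at_left[OF X] using that X
      by (intro exI[of _ 0]) (auto intro!: slope)
  qed simp
  have ab: "a \<le> b"
  proof (rule tendsto_lowerbound[OF QR])
    show "\<forall>\<^sub>F t in at_right X. a \<le> Q t"
      using eventually_at_right_less[of X] by eventually_elim (rule aQ)
  qed simp
  obtain n where n: "n < N" "0 < xP n" using exists_pos_component[of N xP] X by (auto simp: X_def)
  define x where "x = xP n"
  have x: "0 < x" using n by (simp add: x_def)
  obtain D' where D': "\<forall>z\<in>{0<..}. (C n has_vector_derivative D' z) (at z)"
    using ca n unfolding cost_assm_def C1_differentiable_on_def by blast
  have Cd: "(C n has_real_derivative D' x) (at x)"
    using D' x by (simp add: has_real_derivative_iff_has_vector_derivative)
  define g where "g y = C n (x + (y - X))" for y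
  have "((\<lambda>y. x + (y - X)) has_real_derivative 1) (at X)"
    by (auto intro!: derivative_eq_intros)
  then have gd: "(g has_real_derivative D' x * 1) (at X)"
  proof -
    have Cd': "(C n has_real_derivative D' x) (at (x + (X - X)))" using Cd by simp
    show ?thesis unfolding g_def using DERIV_chain2[OF Cd' \<open>((\<lambda>y. x + (y - X)) has_real_derivative 1) (at X)\<close>] .
  qed
  define G where "G y = (g y - g X) / (y - X)" for y
  have GR: "(G \<longlongrightarrow> D' x) (at_right X)" using quot_right'[OF gd] unfolding G_def by simp
  have GL: "(G \<longlongrightarrow> D' x) (at_left X)" using quot_left'[OF gd] unfolding G_def by simp
  define f where "f y = p y * y" for y
  have fb: "(f has_real_derivative (b * X + 1 * p X)) (at X within {X..})"
    unfolding f_def by (intro DERIV_mult b DERIV_ident)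
  have fa: "(f has_real_derivative (a * X + 1 * p X)) (at X within {..X})"
    unfolding f_def by (intro DERIV_mult a DERIV_ident)
  define F where "F y = (f y - f X) / (y - X)" for y
  have FR: "(F \<longlongrightarrow> b * X + p X) (at_right X)" using quot_right[OF fb] unfolding F_def by simp
  have FL: "(F \<longlongrightarrow> a * X + p X) (at_left X)" using quot_left[OF fa] unfolding F_def by simp
  have key: "f y - f X \<le> g y - g X" if "X - x \<le> y" for y
  proof -
    have "p (total N xP + (y - X)) * (total N xP + (y - X)) - C n (xP n + (y - X))
       \<le> p (total N xP) * total N xP - C n (xP n)"
      using mono_perturb[OF mon n(1), of "y - X"] that by (simp add: x_def)
    then show ?thesis by (simp add: f_def g_def X_def x_def)
  qed
  have "b * X + p X \<le> D' x"
  proof (rule tendsto_le[OF _ GR FR])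
    show "\<forall>\<^sub>F y in at_right X. F y \<le> G y"
      using eventually_at_right_less[of X]
    proof eventually_elim
      case (elim y)
      then show ?case using key[of y] x unfolding F_def G_def
        by (intro divide_right_mono) auto
    qed
  qed simp
  moreover have "D' x \<le> a * X + p X"
  proof (rule tendsto_le[OF _ FL GL])
    have "X - x < X" using x by simp
    show "\<forall>\<^sub>F y in at_left X. G y \<le> F y"
      unfolding eventually_at_left[OF \<open>X - x < X\<close>]
    proof (intro exI[of _ "X - x"] conjI allI impI)
      fix y assume "X - x < y" "y < X"
      then show "G y \<le> F y" using key[of y] unfolding F_def G_def
        by (intro divide_right_mono_neg) auto
    qed (use x in simp)
  qed simp
  ultimately have "b * X \<le> a * X" by simp
  then have "b \<le> a" using X by simp
  with ab have "a = b" by simp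
  have "((\<lambda>y. (p y - p X) / (y - X)) \<longlongrightarrow> a) (at X within ({..X} \<union> {X..}))"
    using a b \<open>a = b\<close> by (simp add: has_field_derivative_iff Lim_within_Un)
  moreover have "{..X} \<union> {X..} = UNIV" by auto
  ultimately have "(p has_real_derivative a) (at X)" by (simp add: has_field_derivative_iff)
  then show ?thesis by (auto simp: X_def)
qed



lemma supergrad:
  assumes model: "cournot_assms N p C" and mon: "monopoly_output N p C xP"
    and pd: "(p has_real_derivative D) (at (total N xP))" and n: "n < N" and y: "0 \<le> y"
  shows "(p (total N xP) + D * total N xP) * (y - xP n) \<le> C n y - C n (xP n)"
proof -
  define X where "X = total N xP"
  define x where "x = xP n"
  have x0: "0 \<le> x" using mon n by (auto simp: monopoly_output_def nonneg_profile_def x_def)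
  have cv: "convex_on {0..} (C n)" using model n by (auto simp: cournot_assms_def cost_assm_def)
  define f where "f z = p z * z" for z
  have fd: "(f has_real_derivative (D * X + 1 * p X)) (at X)"
    unfolding f_def using pd X_def by (intro DERIV_mult DERIV_ident) auto
  define F where "F z = (f z - f X) / (z - X)" for z
  define F' where "F' = p X + D * X"
  have FR: "(F \<longlongrightarrow> F') (at_right X)" using quot_right'[OF fd] unfolding F_def F'_def by (simp add: add.commute)
  have FL: "(F \<longlongrightarrow> F') (at_left X)" using quot_left'[OF fd] unfolding F_def F'_def by (simp add: add.commute)
  have key: "f z - f X \<le> C n (x + (z - X)) - C n x" if "0 \<le> x + (z - X)" for z
  proof -
    have "p (total N xP + (z - X)) * (total N xP + (z - X)) - C n (xP n + (z - X))
       \<le> p (total N xP) * total N xP - C n (xP n)"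
      using mono_perturb[OF mon n, of "z - X"] that by (simp add: x_def)
    then show ?thesis by (simp add: f_def X_def x_def)
  qed
  define Q where "Q = (C n y - C n x) / (y - x)"
  consider "y = x" | "x < y" | "y < x" by linarith
  then have "F' * (y - x) \<le> C n y - C n x"
  proof cases
    case 1 then show ?thesis by simp
  next
    case 2
    have "F' \<le> Q"
    proof (rule tendsto_upperbound[OF FR])
      have "X < X + (y - x)" using 2 by simp
      show "\<forall>\<^sub>F z in at_right X. F z \<le> Q"
        unfolding eventually_at_right[OF \<open>X < X + (y - x)\<close>]
      proof (intro exI[of _ "X + (y - x)"] conjI allI impI)
        fix z assume z: "X < z" "z < X + (y - x)"
        define t where "t = z - X"
        have t: "0 < t" "t < y - x" using z by (auto simp: t_def)
        have "(C n x - C n (x + t)) / (x - (x + t)) \<le> (C n x - C n y) / (x - y)"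
          using convex_on_slope_le(1)[OF cv, of x y "x + t"] t x0 by auto
        moreover have "(C n x - C n (x + t)) / (x - (x + t)) = (C n (x + t) - C n x) / t"
          by (simp add: divide_simps)
        moreover have "(C n x - C n y) / (x - y) = Q"
          unfolding Q_def by (metis minus_diff_eq minus_divide_divide)
        moreover have "F z \<le> (C n (x + t) - C n x) / t"
        proof -
          have "f z - f X \<le> C n (x + t) - C n x" using key[of z] t x0 by (simp add: t_def)
          then have "(f z - f X) / t \<le> (C n (x + t) - C n x) / t" using t by (intro divide_right_mono) auto
          then show ?thesis by (simp add: F_def t_def)
        qed
        ultimately show "F z \<le> Q" by simp
      qed (rule \<open>X < X + (y - x)\<close>)
    qed simp
    then have "F' * (y - x) \<le> Q * (y - x)" using 2 by (intro mult_right_mono) auto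
    also have "\<dots> = C n y - C n x" using 2 by (simp add: Q_def)
    finally show ?thesis .
  next
    case 3
    have "Q \<le> F'"
    proof (rule tendsto_lowerbound[OF FL])
      have "X - (x - y) < X" using 3 by simp
      show "\<forall>\<^sub>F z in at_left X. Q \<le> F z"
        unfolding eventually_at_left[OF \<open>X - (x - y) < X\<close>]
      proof (intro exI[of _ "X - (x - y)"] conjI allI impI)
        fix z assume z: "X - (x - y) < z" "z < X"
        define t where "t = z - X"
        have t: "t < 0" "y - x < t" using z by (auto simp: t_def)
        have "(C n y - C n x) / (y - x) \<le> (C n (x + t) - C n x) / ((x + t) - x)"
          using convex_on_slope_le(2)[OF cv, of y x "x + t"] t y by auto
        moreover have "F z \<ge> (C n (x + t) - C n x) / t"
        proof -
          have "f z - f X \<le> C n (x + t) - C n x" using key[of z] t y by (simp add: t_def)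
          then have "(C n (x + t) - C n x) / t \<le> (f z - f X) / t" using t by (intro divide_right_mono_neg) auto
          then show ?thesis by (simp add: F_def t_def)
        qed
        ultimately show "Q \<le> F z" by (simp add: Q_def)
      qed (rule \<open>X - (x - y) < X\<close>)
    qed simp
    then have "F' * (y - x) \<le> Q * (y - x)" using 3 by (intro mult_right_mono_neg) auto
    also have "\<dots> = C n y - C n x" using 3 by (simp add: Q_def)
    finally show ?thesis .
  qed
  then show ?thesis by (simp add: F'_def X_def x_def)
qed

lemma tangent:
  assumes pconv: "convex_on {0..} p" and pd: "(p has_real_derivative D) (at X)"
    and X: "0 < X" and q: "0 \<le> q"
  shows "p X + D * (q - X) \<le> p q"
proof -
  define F where "F z = (p z - p X) / (z - X)" for z
  have FR: "(F \<longlongrightarrow> D) (at_right X)" using quot_right'[OF pd] unfolding F_def by simp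
  have FL: "(F \<longlongrightarrow> D) (at_left X)" using quot_left'[OF pd] unfolding F_def by simp
  consider "q = X" | "X < q" | "q < X" by linarith
  then show ?thesis
  proof cases
    case 1 then show ?thesis by simp
  next
    case 2
    have "D \<le> F q"
    proof (rule tendsto_upperbound[OF FR])
      show "\<forall>\<^sub>F z in at_right X. F z \<le> F q"
        unfolding eventually_at_right[OF 2]
      proof (intro exI[of _ q] conjI allI impI)
        fix z assume z: "X < z" "z < q"
        have "(p X - p z) / (X - z) \<le> (p X - p q) / (X - q)"
          using convex_on_slope_le(1)[OF pconv, of X q z] z X by auto
        then show "F z \<le> F q" unfolding F_def
          by (metis minus_diff_eq minus_divide_divide)
      qed (rule 2)
    qed simp
    then have "D * (q - X) \<le> F q * (q - X)" using 2 by (intro mult_right_mono) auto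
    also have "\<dots> = p q - p X" using 2 by (simp add: F_def)
    finally show ?thesis by simp
  next
    case 3
    have "F q \<le> D"
    proof (rule tendsto_lowerbound[OF FL])
      show "\<forall>\<^sub>F z in at_left X. F q \<le> F z"
        unfolding eventually_at_left[OF 3]
      proof (intro exI[of _ q] conjI allI impI)
        fix z assume z: "q < z" "z < X"
        have "(p q - p X) / (q - X) \<le> (p z - p X) / (z - X)"
          using convex_on_slope_le(2)[OF pconv, of q X z] z q by auto
        then show "F q \<le> F z" unfolding F_def .
      qed (rule 3)
    qed simp
    then have "D * (q - X) \<le> F q * (q - X)" using 3 by (intro mult_right_mono_neg) auto
    also have "\<dots> = p q - p X" using 3 by (simp add: F_def)
    finally show ?thesis by simp
  qed
qed

lemma deriv_nonpos:
  assumes pa: "price_assm p" and pd: "(p has_real_derivative D) (at X)" and X: "0 \<le> X"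
  shows "D \<le> 0"
proof (rule tendsto_upperbound[OF quot_right'[OF pd]])
  show "\<forall>\<^sub>F z in at_right X. (p z - p X) / (z - X) \<le> 0"
    using eventually_at_right_less[of X]
  proof eventually_elim
    case (elim z)
    then have "p z \<le> p X" using pmono[OF pa X] by simp
    then show ?case using elim by (simp add: divide_nonpos_pos)
  qed
qed simp



lemma int_linear:
  fixes a b u v :: real
  assumes "a \<le> b"
  shows "integral {a..b} (\<lambda>q. u + v * (q - a)) = u * (b - a) + v * (b - a)^2 / 2"
proof -
  define H where "H q = u * q + v * (q - a)^2 / 2" for q
  have "((\<lambda>q. u + v * (q - a)) has_integral (H b - H a)) {a..b}"
  proof (rule fundamental_theorem_of_calculus[OF assms])
    fix x :: real assume "x \<in> {a..b}"
    have "(H has_real_derivative (u + v * (x - a))) (at x within {a..b})"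
      unfolding H_def by (auto intro!: derivative_eq_intros simp: power2_eq_square field_simps)
    then show "(H has_vector_derivative (u + v * (x - a))) (at x within {a..b})"
      by (simp add: has_real_derivative_iff_has_vector_derivative)
  qed
  then have "integral {a..b} (\<lambda>q. u + v * (q - a)) = H b - H a" by (rule integral_unique)
  also have "\<dots> = u * (b - a) + v * (b - a)^2 / 2" by (simp add: H_def algebra_simps)
  finally show ?thesis .
qed

lemma int_split:
  assumes pa: "price_assm p" and "0 \<le> m" "m \<le> X"
  shows "integral {0..X} p = integral {0..m} p + integral {m..X} p"
  using Henstock_Kurzweil_Integration.integral_combine[where a=0 and c=m and b=X and f=p] pint[OF pa, of 0 X] assms by simp

lemma int_split_const:
  assumes pa: "price_assm p" and m: "0 \<le> m" "m \<le> X" and eq: "p m = p X"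
  shows "integral {0..X} p = integral {0..m} p + p X * (X - m)"
proof -
  have "integral {m..X} p = integral {m..X} (\<lambda>_. p X)"
  proof (rule integral_cong)
    fix q assume q: "q \<in> {m..X}"
    have "p X \<le> p q" using pmono[OF pa, of q X] q m by auto
    moreover have "p q \<le> p m" using pmono[OF pa, of m q] q m by auto
    ultimately show "p q = p X" using eq by simp
  qed
  then show ?thesis using int_split[OF pa m] m by simp
qed

lemma part_a:
  assumes model: "cournot_assms N p C" and soc: "social_optimum N p C xS"
    and mon: "monopoly_output N p C xP" and eq: "p (total N xP) = p (total N xS)"
  shows "efficiency N p C xS xP = 1"
proof -
  have pa: "price_assm p" using model by (simp add: cournot_assms_def)
  define XP where "XP = total N xP"
  define XS where "XS = total N xS"
  define m where "m = min XP XS"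
  have XP0: "0 \<le> XP" using mon total_nonneg by (auto simp: monopoly_output_def XP_def)
  have XS0: "0 \<le> XS" using soc total_nonneg by (auto simp: social_optimum_def XS_def)
  have pm: "p m = p XP" using eq by (simp add: m_def min_def XP_def XS_def)
  have pm': "p m = p XS" using eq by (simp add: m_def min_def XP_def XS_def)
  have IP: "integral {0..XP} p = integral {0..m} p + p XP * (XP - m)"
    using int_split_const[OF pa, of m XP] pm XP0 XS0 by (simp add: m_def)
  have IS: "integral {0..XS} p = integral {0..m} p + p XS * (XS - m)"
    using int_split_const[OF pa, of m XS] pm' XP0 XS0 by (simp add: m_def)
  have "total_profit N p C xS \<le> total_profit N p C xP"
    using mon soc by (auto simp: monopoly_output_def social_optimum_def)
  then have "welfare N p C xS \<le> welfare N p C xP"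
    using IP IS eq unfolding welfare_def total_profit_def XP_def XS_def by (simp add: algebra_simps)
  moreover have "welfare N p C xP \<le> welfare N p C xS"
    using mon soc by (auto simp: monopoly_output_def social_optimum_def)
  ultimately have "welfare N p C xP = welfare N p C xS" by simp
  moreover have "0 < welfare N p C xS" using WS_pos[OF model soc] by simp
  ultimately show ?thesis by (simp add: efficiency_def)
qed



lemma XP_le_XS:
  assumes model: "cournot_assms N p C" and soc: "social_optimum N p C xS"
    and mon: "monopoly_output N p C xP" and ne: "p (total N xP) \<noteq> p (total N xS)"
  shows "total N xP < total N xS"
proof (rule ccontr)
  have pa: "price_assm p" using model by (simp add: cournot_assms_def)
  define XP where "XP = total N xP"
  define XS where "XS = total N xS"
  assume "\<not> total N xP < total N xS"
  then have le: "XS \<le> XP" by (simp add: XP_def XS_def)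
  have XS0: "0 < XS" using WS_pos[OF model soc] by (simp add: XS_def)
  have split: "integral {0..XP} p = integral {0..XS} p + integral {XS..XP} p"
    using int_split[OF pa, of XS XP] XS0 le by simp
  have "integral {XS..XP} (\<lambda>_. p XP) \<le> integral {XS..XP} p"
    using XS0 by (intro integral_le pint[OF pa]) (auto intro: pmono[OF pa])
  then have low: "p XP * (XP - XS) \<le> integral {XS..XP} p" using le by (simp add: mult.commute)
  have w: "welfare N p C xP \<le> welfare N p C xS"
    using mon soc by (auto simp: monopoly_output_def social_optimum_def)
  have pr: "total_profit N p C xS \<le> total_profit N p C xP"
    using mon soc by (auto simp: monopoly_output_def social_optimum_def)
  have "p XS * XS \<le> p XP * XS"
    using w pr split low unfolding welfare_def total_profit_def XP_def[symmetric] XS_def[symmetric]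
    by (simp add: algebra_simps)
  then have "p XS \<le> p XP" using XS0 by simp
  moreover have "p XP \<le> p XS" using pmono[OF pa, of XS XP] XS0 le by simp
  ultimately show False using ne by (simp add: XP_def XS_def)
qed

lemma sum_supergrad:
  assumes model: "cournot_assms N p C" and mon: "monopoly_output N p C xP"
    and pd: "(p has_real_derivative D) (at (total N xP))" and y: "nonneg_profile N y"
  shows "(p (total N xP) + D * total N xP) * (total N y - total N xP)
     \<le> (\<Sum>n<N. C n (y n)) - (\<Sum>n<N. C n (xP n))"
proof -
  have "(p (total N xP) + D * total N xP) * (total N y - total N xP)
      = (\<Sum>n<N. (p (total N xP) + D * total N xP) * (y n - xP n))"
    by (simp only: total_def sum_distrib_left[symmetric] sum_subtractf[symmetric])
  also have "\<dots> \<le> (\<Sum>n<N. C n (y n) - C n (xP n))"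
    using y by (intro sum_mono supergrad[OF model mon pd]) (auto simp: nonneg_profile_def)
  also have "\<dots> = (\<Sum>n<N. C n (y n)) - (\<Sum>n<N. C n (xP n))" by (simp add: sum_subtractf)
  finally show ?thesis .
qed



lemma part_b:
  assumes model: "cournot_assms N p C" and pconv: "convex_on {0..} p"
    and soc: "social_optimum N p C xS"
    and mon: "monopoly_output N p C xP" and ne: "p (total N xP) \<noteq> p (total N xS)"
  shows "p differentiable (at (total N xP))
         \<and> 1 \<le> cbar p (total N xS) (total N xP)
         \<and> efficiency N p C xS xP \<ge> 3 / (3 + cbar p (total N xS) (total N xP))"
proof -
  have pa: "price_assm p" using model by (simp add: cournot_assms_def)
  define XP where "XP = total N xP"
  define XS where "XS = total N xS"
  define P where "P = p XP"
  define PS where "PS = p XS"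
  define CP where "CP = (\<Sum>n<N. C n (xP n))"
  define CS where "CS = (\<Sum>n<N. C n (xS n))"
  have XP0: "0 < XP" using XP_pos[OF model mon] by (simp add: XP_def)
  have lt: "XP < XS" using XP_le_XS[OF model soc mon ne] by (simp add: XP_def XS_def)
  have WS: "0 < welfare N p C xS" using WS_pos[OF model soc] by simp
  obtain D where pd: "(p has_real_derivative D) (at XP)" using p_diff[OF model pconv mon] by (auto simp: XP_def)
  have diff: "p differentiable (at XP)" using pd real_differentiable_def by blast
  have dv: "deriv p XP = D" using pd by (rule DERIV_imp_deriv)
  have D0: "D \<le> 0" using deriv_nonpos[OF pa pd] XP0 by simp
  define c where "c = - D"
  define \<Delta> where "\<Delta> = XS - XP"
  have \<Delta>: "0 < \<Delta>" using lt by (simp add: \<Delta>_def)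
  have PSle: "PS \<le> P" using pmono[OF pa, of XP XS] XP0 lt by (simp add: P_def PS_def)
  have PSne: "PS \<noteq> P" using ne by (simp add: P_def PS_def XP_def XS_def)
  define d where "d = (P - PS) / \<Delta>"
  have d0: "0 < d" using PSle PSne \<Delta> by (simp add: d_def)
  have PSd: "PS = P - d * \<Delta>" using \<Delta> by (simp add: d_def)
  have tanS: "P + D * (XS - XP) \<le> PS" using tangent[OF pconv pd XP0, of XS] XP0 lt by (simp add: P_def PS_def)
  then have "d * \<Delta> \<le> c * \<Delta>" using PSd by (simp add: c_def \<Delta>_def algebra_simps)
  then have dc: "d \<le> c" using \<Delta> by simp
  have cb: "cbar p XS XP = c / d"
  proof -
    have "\<bar>(p XS - p XP) / (XS - XP)\<bar> = d"
      using PSle \<Delta> unfolding d_def P_def PS_def \<Delta>_def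
      by (simp add: abs_div_pos abs_if divide_simps)
    then show ?thesis unfolding cbar_def dv using D0 by (simp add: c_def)
  qed
  have cb1: "1 \<le> c / d" using dc d0 by simp
  define F' where "F' = P + D * XP"
  have F': "F' = P - c * XP" by (simp add: F'_def c_def)
  have nnP: "nonneg_profile N xP" and nnS: "nonneg_profile N xS"
    using mon soc by (auto simp: monopoly_output_def social_optimum_def)
  have cost1: "F' * (XS - XP) \<le> CS - CP"
    using sum_supergrad[OF model mon _ nnS] pd unfolding F'_def CS_def CP_def P_def XP_def XS_def by simp
  have nn0: "nonneg_profile N (\<lambda>_. 0)" by (simp add: nonneg_profile_def)
  have c00: "(\<Sum>n<N. C n 0) = 0" using model by (auto simp: cournot_assms_def cost_assm_def)
  have cost2: "F' * (0 - XP) \<le> 0 - CP"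
    using sum_supergrad[OF model mon _ nn0] pd c00 unfolding F'_def CP_def P_def XP_def
    by (simp add: total_def)
  have split: "integral {0..XS} p = integral {0..XP} p + integral {XP..XS} p"
    using int_split[OF pa, of XP XS] XP0 lt by simp
  have I1: "integral {XP..XS} p \<le> P * \<Delta> + (PS - P) / \<Delta> * \<Delta>^2 / 2"
  proof -
    have cvs: "convex_on {XP..XS} p" using XP0 by (intro convex_on_subset[OF pconv]) auto
    have "integral {XP..XS} p \<le> integral {XP..XS} (\<lambda>q. P + (PS - P) / \<Delta> * (q - XP))"
    proof (rule integral_le)
      show "p integrable_on {XP..XS}" using pint[OF pa] XP0 by simp
      show "(\<lambda>q. P + (PS - P) / \<Delta> * (q - XP)) integrable_on {XP..XS}"
        by (intro integrable_continuous_interval continuous_intros)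
      fix q assume "q \<in> {XP..XS}"
      then show "p q \<le> P + (PS - P) / \<Delta> * (q - XP)"
        using convex_onD_Icc'[OF cvs, of q] unfolding P_def PS_def \<Delta>_def by simp
    qed
    also have "\<dots> = P * \<Delta> + (PS - P) / \<Delta> * \<Delta>^2 / 2"
      using int_linear[of XP XS P "(PS - P) / \<Delta>"] lt by (simp add: \<Delta>_def)
    finally show ?thesis .
  qed
  have I2: "P * XP + c * XP^2 / 2 \<le> integral {0..XP} p"
  proof -
    have "integral {0..XP} (\<lambda>q. (P - D * XP) + D * (q - 0)) \<le> integral {0..XP} p"
    proof (rule integral_le)
      show "p integrable_on {0..XP}" using pint[OF pa] by simp
      show "(\<lambda>q. (P - D * XP) + D * (q - 0)) integrable_on {0..XP}"
        by (intro integrable_continuous_interval continuous_intros)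
      fix q assume "q \<in> {0..XP}"
      then show "(P - D * XP) + D * (q - 0) \<le> p q"
        using tangent[OF pconv pd XP0, of q] unfolding P_def by (simp add: algebra_simps)
    qed
    moreover have "integral {0..XP} (\<lambda>q. (P - D * XP) + D * (q - 0)) = (P - D * XP) * XP + D * XP^2 / 2"
      using int_linear[of 0 XP "P - D * XP" D] XP0 by simp
    ultimately show ?thesis by (simp add: c_def power2_eq_square algebra_simps)
  qed
  have WP: "welfare N p C xP = integral {0..XP} p - CP" by (simp add: welfare_def XP_def CP_def)
  have WSd: "welfare N p C xS = integral {0..XS} p - CS" by (simp add: welfare_def XS_def CS_def)
  have WPlow: "3 / 2 * c * XP^2 \<le> welfare N p C xP"
    using WP I2 cost2 F' by (simp add: power2_eq_square algebra_simps)
  have loss: "welfare N p C xS - welfare N p C xP \<le> c * XP * \<Delta> - d * \<Delta>^2 / 2"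
  proof -
    have "welfare N p C xS - welfare N p C xP = integral {XP..XS} p - (CS - CP)"
      using WP WSd split by simp
    also have "\<dots> \<le> P * \<Delta> + (PS - P) / \<Delta> * \<Delta>^2 / 2 - F' * \<Delta>"
      using I1 cost1 by (simp add: \<Delta>_def)
    also have "\<dots> = c * XP * \<Delta> - d * \<Delta>^2 / 2"
      using \<Delta> unfolding F' PSd by (simp add: power2_eq_square field_simps)
    finally show ?thesis .
  qed
  have sq: "3 * (c * XP * \<Delta> - d * \<Delta>^2 / 2) \<le> c / d * (3 / 2 * c * XP^2)"
  proof -
    have "0 \<le> 3 / 2 * (c * XP - d * \<Delta>)^2" by simp
    then have "d * (3 * (c * XP * \<Delta> - d * \<Delta>^2 / 2)) \<le> d * (c / d * (3 / 2 * c * XP^2))"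
      using d0 by (simp add: power2_eq_square algebra_simps)
    then show ?thesis using d0 by (rule mult_left_le_imp_le)
  qed
  have "c / d * (3 / 2 * c * XP^2) \<le> c / d * welfare N p C xP"
    using WPlow cb1 by (intro mult_left_mono) auto
  then have main: "3 * welfare N p C xS \<le> (3 + c / d) * welfare N p C xP"
    using loss sq by (simp add: algebra_simps)
  have "3 / (3 + c / d) \<le> welfare N p C xP / welfare N p C xS"
  proof -
    define k where "k = c / d"
    define a where "a = welfare N p C xP"
    define b where "b = welfare N p C xS"
    have k: "0 < 3 + k" using cb1 by (simp add: k_def)
    have "3 * b \<le> (3 + k) * a" using main by (simp add: k_def a_def b_def)
    then have "3 * b / (3 + k) \<le> a" using k by (simp add: divide_le_eq mult.commute)
    then have "3 / (3 + k) * b \<le> a" by simp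
    then have "3 / (3 + k) \<le> a / b" using WS by (simp add: le_divide_eq b_def)
    then show ?thesis by (simp add: k_def a_def b_def)
  qed
  then show ?thesis using diff cb cb1
    by (simp add: efficiency_def XP_def XS_def)
qed



definition p0 :: "real \<Rightarrow> real" where "p0 x = max (1 - x) 0"

lemma p0_deriv_neg:
  assumes "q \<in> S" "S \<subseteq> {..1} \<or> q < 1"
  shows "(p0 has_real_derivative -1) (at q within S)"
proof -
  have d: "((\<lambda>x. 1 - x) has_real_derivative -1) (at q within S)"
    by (auto intro!: derivative_eq_intros)
  define e where "e = (if q < 1 then 1 - q else 1)"
  have e: "0 < e" by (simp add: e_def)
  show ?thesis
  proof (rule has_field_derivative_transform_within[OF d e assms(1)])
    fix x assume x: "x \<in> S" "dist x q < e"
    then have "x \<le> 1" using assms(2) by (auto simp: e_def dist_real_def split: if_splits)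
    then show "1 - x = p0 x" by (simp add: p0_def)
  qed
qed

lemma p0_deriv_zero:
  assumes "q \<in> S" "S \<subseteq> {1..} \<or> 1 < q"
  shows "(p0 has_real_derivative 0) (at q within S)"
proof -
  have d: "((\<lambda>x. 0) has_real_derivative 0) (at q within S)"
    by (auto intro!: derivative_eq_intros)
  define e where "e = (if 1 < q then q - 1 else 1)"
  have e: "0 < e" by (simp add: e_def)
  show ?thesis
  proof (rule has_field_derivative_transform_within[OF d e assms(1)])
    fix x assume x: "x \<in> S" "dist x q < e"
    then have "1 \<le> x" using assms(2) by (auto simp: e_def dist_real_def split: if_splits)
    then show "0 = p0 x" by (simp add: p0_def)
  qed
qed

lemma p0_cont: "continuous_on S p0"
  unfolding p0_def by (intro continuous_intros)

lemma p0_price: "price_assm p0"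
  unfolding price_assm_def
proof (intro conjI allI impI)
  show "continuous_on {0..} p0" by (rule p0_cont)
  show "\<And>q. 0 \<le> q \<Longrightarrow> 0 \<le> p0 q" by (simp add: p0_def)
  show "antimono_on {0..} p0" by (intro monotone_onI) (auto simp: p0_def)
  show "0 < p0 0" by (simp add: p0_def)
  show "\<exists>d. (p0 has_real_derivative d) (at 0 within {0..})"
    using p0_deriv_neg[of 0 "{0..}"] by auto
  fix q :: real assume "0 < q"
  show "\<exists>d. (p0 has_real_derivative d) (at q within {..q})"
  proof (cases "q \<le> 1")
    case True
    then have "{..q} \<subseteq> {..1}" by auto
    then show ?thesis using p0_deriv_neg[of q "{..q}"] by auto
  next
    case False
    then show ?thesis using p0_deriv_zero[of q "{..q}"] by auto
  qed
  show "\<exists>d. (p0 has_real_derivative d) (at q within {q..})"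
  proof (cases "q < 1")
    case True
    then show ?thesis using p0_deriv_neg[of q "{q..}"] by auto
  next
    case False
    then have "{q..} \<subseteq> {1..}" by auto
    then show ?thesis using p0_deriv_zero[of q "{q..}"] by auto
  qed
qed

lemma p0_convex: "convex_on {0..} p0"
proof (rule convex_onI)
  show "convex {0::real..}" by simp
  fix t x y :: real assume t: "0 < t" "t < 1"
  have "1 - ((1 - t) * x + t * y) = (1 - t) * (1 - x) + t * (1 - y)" by (simp add: algebra_simps)
  moreover have "(1 - t) * (1 - x) \<le> (1 - t) * max (1 - x) 0" using t by (intro mult_left_mono) auto
  moreover have "t * (1 - y) \<le> t * max (1 - y) 0" using t by (intro mult_left_mono) auto
  moreover have "0 \<le> (1 - t) * max (1 - x) 0" "0 \<le> t * max (1 - y) 0" using t by auto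
  ultimately show "p0 ((1 - t) *\<^sub>R x + t *\<^sub>R y) \<le> (1 - t) * p0 x + t * p0 y"
    unfolding p0_def by simp
qed

lemma rderiv0_eq: "(f has_real_derivative d) (at 0 within {0..}) \<Longrightarrow> rderiv0 f = d"
  unfolding rderiv0_def
proof (rule the_equality)
  fix d' assume "(f has_real_derivative d) (at 0 within {0..})" "(f has_real_derivative d') (at 0 within {0..})"
  then show "d' = d" using not_bot_within_Ici[of 0]
    by (auto simp: has_field_derivative_iff intro: tendsto_unique)
qed

lemma p0_int: assumes "0 \<le> X" shows "integral {0..X} p0 = (if X \<le> 1 then X - X^2/2 else 1/2)"
proof (cases "X \<le> 1")
  case True
  have "integral {0..X} p0 = integral {0..X} (\<lambda>q. 1 + (-1) * (q - 0))"
    using True by (intro integral_cong) (auto simp: p0_def)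
  also have "\<dots> = X - X^2/2" using int_linear[of 0 X 1 "-1"] assms by simp
  finally show ?thesis using True by simp
next
  case False
  have "integral {0..X} p0 = integral {0..1} p0 + integral {1..X} p0"
    using Henstock_Kurzweil_Integration.integral_combine[where a=0 and c=1 and b=X and f=p0]
      integrable_continuous_interval[OF p0_cont] False by simp
  moreover have "integral {1..X} p0 = integral {1..X} (\<lambda>_. 0)"
    by (intro integral_cong) (auto simp: p0_def)
  moreover have "integral {0..1} p0 = 1 - 1^2/2"
  proof -
    have "integral {0..1} p0 = integral {0..1} (\<lambda>q. 1 + (-1) * (q - 0))"
      by (intro integral_cong) (auto simp: p0_def)
    also have "\<dots> = 1 - 1^2/2" using int_linear[of 0 1 1 "-1"] by simp
    finally show ?thesis .
  qed
  ultimately show ?thesis using False by simp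
qed

lemma part_c:
  "\<exists>(N'::nat) (p'::real \<Rightarrow> real) (C'::nat \<Rightarrow> real \<Rightarrow> real) (yS::nat \<Rightarrow> real) (yP::nat \<Rightarrow> real).
         cournot_assms N' p' C' \<and> convex_on {0..} p'
         \<and> social_optimum N' p' C' yS \<and> monopoly_output N' p' C' yP
         \<and> p' (total N' yP) \<noteq> p' (total N' yS)
         \<and> p' differentiable (at (total N' yP))
         \<and> cbar p' (total N' yS) (total N' yP) = 1
         \<and> efficiency N' p' C' yS yP = 3 / 4"
proof -
  define C0 :: "nat \<Rightarrow> real \<Rightarrow> real" where "C0 = (\<lambda>n x. 0)"
  define yS :: "nat \<Rightarrow> real" where "yS = (\<lambda>n. 1)"
  define yP :: "nat \<Rightarrow> real" where "yP = (\<lambda>n. 1/2)"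
  have tS: "total 1 yS = 1" by (simp add: total_def yS_def)
  have tP: "total 1 yP = 1/2" by (simp add: total_def yP_def)
  have tot1: "total 1 y = y 0" for y by (simp add: total_def)
  have ca: "cost_assm (\<lambda>x. 0)"
    by (simp add: cost_assm_def convex_on_const mono_on_const)
  have rd: "rderiv0 (\<lambda>x. 0) = 0"
    by (rule rderiv0_eq) (auto intro!: derivative_eq_intros)
  have model: "cournot_assms 1 p0 C0"
    unfolding cournot_assms_def C0_def using ca p0_price rd
    by (auto intro!: exI[of _ 1] simp: p0_def)
  have soc: "social_optimum 1 p0 C0 yS"
    unfolding social_optimum_def
  proof (intro conjI allI impI)
    show "nonneg_profile 1 yS" by (simp add: nonneg_profile_def yS_def)
    fix y assume "nonneg_profile 1 y"
    then have y0: "0 \<le> y 0" by (simp add: nonneg_profile_def)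
    have "welfare 1 p0 C0 y = (if y 0 \<le> 1 then y 0 - (y 0)^2/2 else 1/2)"
      using p0_int[OF y0] unfolding welfare_def tot1 by (simp add: C0_def)
    also have "\<dots> \<le> 1/2"
    proof -
      have "0 \<le> (y 0 - 1)^2" by simp
      then show ?thesis by (auto simp: power2_eq_square algebra_simps)
    qed
    also have "\<dots> = welfare 1 p0 C0 yS"
      using p0_int[of 1] unfolding welfare_def tS by (simp add: C0_def)
    finally show "welfare 1 p0 C0 y \<le> welfare 1 p0 C0 yS" .
  qed
  have mon: "monopoly_output 1 p0 C0 yP"
    unfolding monopoly_output_def
  proof (intro conjI allI impI)
    show "nonneg_profile 1 yP" by (simp add: nonneg_profile_def yP_def)
    fix y assume "nonneg_profile 1 y"
    then have y0: "0 \<le> y 0" by (simp add: nonneg_profile_def)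
    have "total_profit 1 p0 C0 y = max (1 - y 0) 0 * y 0" unfolding total_profit_def tot1 by (simp add: C0_def p0_def)
    also have "\<dots> \<le> 1/4"
    proof (cases "y 0 \<le> 1")
      case True
      have "0 \<le> (y 0 - 1/2)^2" by simp
      then show ?thesis using True by (simp add: power2_eq_square algebra_simps)
    next
      case False
      then show ?thesis by simp
    qed
    also have "\<dots> = total_profit 1 p0 C0 yP" unfolding total_profit_def tP by (simp add: C0_def p0_def)
    finally show "total_profit 1 p0 C0 y \<le> total_profit 1 p0 C0 yP" .
  qed
  have dP: "(p0 has_real_derivative -1) (at (1/2))"
    using p0_deriv_neg[of "1/2" UNIV] by simp
  have ne: "p0 (total 1 yP) \<noteq> p0 (total 1 yS)" unfolding tP tS by (simp add: p0_def)
  have diff: "p0 differentiable (at (total 1 yP))" unfolding tP using dP real_differentiable_def by auto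
  have cb: "cbar p0 (total 1 yS) (total 1 yP) = 1"
    using DERIV_imp_deriv[OF dP] unfolding cbar_def tP tS by (simp add: p0_def)
  have eff: "efficiency 1 p0 C0 yS yP = 3/4"
  proof -
    have a: "integral {0..1/2} p0 = 3/8" using p0_int[of "1/2"] by (simp add: power2_eq_square)
    have b: "integral {0..1} p0 = 1/2" using p0_int[of 1] by simp
    show ?thesis using a b
      unfolding efficiency_def welfare_def tP tS C0_def by (simp only: a b) simp
  qed
  show ?thesis
    using model p0_convex soc mon ne diff cb eff by blast
qed


theorem theorem3:
  fixes N :: nat and p :: "real \<Rightarrow> real" and C :: "nat \<Rightarrow> real \<Rightarrow> real"
    and xS xP :: "nat \<Rightarrow> real"
  assumes model: "cournot_assms N p C"
    and pconv: "convex_on {0..} p"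
    and soc: "social_optimum N p C xS"
    and mon: "monopoly_output N p C xP"
  shows "(p (total N xP) = p (total N xS) \<longrightarrow> efficiency N p C xS xP = 1)
    \<and> (p (total N xP) \<noteq> p (total N xS) \<longrightarrow>
         p differentiable (at (total N xP))
         \<and> 1 \<le> cbar p (total N xS) (total N xP)
         \<and> efficiency N p C xS xP \<ge> 3 / (3 + cbar p (total N xS) (total N xP)))
    \<and> (\<exists>(N'::nat) (p'::real \<Rightarrow> real) (C'::nat \<Rightarrow> real \<Rightarrow> real) (yS::nat \<Rightarrow> real) (yP::nat \<Rightarrow> real).
         cournot_assms N' p' C' \<and> convex_on {0..} p'
         \<and> social_optimum N' p' C' yS \<and> monopoly_output N' p' C' yP
         \<and> p' (total N' yP) \<noteq> p' (total N' yS)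
         \<and> p' differentiable (at (total N' yP))
         \<and> cbar p' (total N' yS) (total N' yP) = 1
         \<and> efficiency N' p' C' yS yP = 3 / 4)"
  using part_a[OF model soc mon] part_b[OF model pconv soc mon] part_c by blast

end
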